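(* Let $S_n$ be the star graph with vertex set $V=\{a_1,\dots,a_n\}$ and center $a_1$, and let $p\geq 1$. There exists $f:V\to\mathbb{R}$, not identically zero, with $\frac{\|M_{S_n}f\|_p}{\|f\|_p}=\|M_{S_n}\|_p$, such that $f(a_1)=\max_{v\in V}f(v)$ and the restriction of $f$ to $V\setminus\{a_1\}$ takes at most two values.
   Context: For a finite connected graph $G=(V,E)$ with graph distance $d_G$ and $f:V\to\mathbb{R}$, $M_Gf(v)=\sup_{r\geq 0}\frac{1}{|B(v,r)|}\sum_{u\in B(v,r)}|f(u)|$, where $B(v,r)=\{u\in V: d_G(u,v)\le r\}$. For $g:V\to\mathbb{R}$, $\|g\|_p=(\sum_{v\in V}|g(v)|^p)^{1/p}$ and $\|M_G\|_p=\sup_{f\neq 0}\|M_Gf\|_p/\|f\|_p$. The star graph $S_n$ has edges exactly between $a_1$ and each $a_i$, $i\ge 2$. *)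

theory Defs
  imports "HOL-Analysis.Analysis"
begin

definition graph_dist :: "('a \<times> 'a) set \<Rightarrow> 'a \<Rightarrow> 'a \<Rightarrow> nat" where
  "graph_dist E u v = (LEAST k. (u, v) \<in> E ^^ k)"

definition ball_G :: "'a set \<Rightarrow> ('a \<times> 'a) set \<Rightarrow> 'a \<Rightarrow> real \<Rightarrow> 'a set" where
  "ball_G V E v r = {u \<in> V. real (graph_dist E u v) \<le> r}"

definition maximal_op :: "'a set \<Rightarrow> ('a \<times> 'a) set \<Rightarrow> ('a \<Rightarrow> real) \<Rightarrow> 'a \<Rightarrow> real" where
  "maximal_op V E f v =
     (SUP r \<in> {0..}. (\<Sum>u \<in> ball_G V E v r. \<bar>f u\<bar>) / real (card (ball_G V E v r)))"

definition pnorm :: "'a set \<Rightarrow> real \<Rightarrow> ('a \<Rightarrow> real) \<Rightarrow> real" where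
  "pnorm V p g = (\<Sum>v \<in> V. \<bar>g v\<bar> powr p) powr (1 / p)"

definition maximal_op_norm :: "'a set \<Rightarrow> ('a \<times> 'a) set \<Rightarrow> real \<Rightarrow> real" where
  "maximal_op_norm V E p =
     (SUP f \<in> {f. \<exists>v \<in> V. f v \<noteq> 0}. pnorm V p (maximal_op V E f) / pnorm V p f)"

text \<open>Star graph S_n: vertices a_1..a_n represented as 1..n, center 1.\<close>

definition star_V :: "nat \<Rightarrow> nat set" where
  "star_V n = {1..n}"

definition star_E :: "nat \<Rightarrow> (nat \<times> nat) set" where
  "star_E n = {(1, i) | i. i \<in> {2..n}} \<union> {(i, 1) | i. i \<in> {2..n}}"

end

theory Submission
  imports Defs
begin

lemma star_E_mem: "(a, b) \<in> star_E n \<longleftrightarrow> (a = 1 \<and> b \<in> {2..n}) \<or> (b = 1 \<and> a \<in> {2..n})"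
  unfolding star_E_def by auto

lemma gd_self: "graph_dist E v v = 0"
  unfolding graph_dist_def by (rule Least_equality) auto

lemma gd_one: assumes "i \<in> {2..n}" "(a = 1 \<and> b = i) \<or> (a = i \<and> b = 1)"
  shows "graph_dist (star_E n) a b = 1"
  unfolding graph_dist_def
proof (rule Least_equality)
  show "(a, b) \<in> star_E n ^^ 1" using assms by (auto simp: star_E_mem)
next
  fix m assume "(a, b) \<in> star_E n ^^ m"
  then show "1 \<le> m" using assms by (cases m) auto
qed

lemma gd_two: assumes "i \<in> {2..n}" "j \<in> {2..n}" "i \<noteq> j"
  shows "graph_dist (star_E n) j i = 2"
  unfolding graph_dist_def
proof (rule Least_equality)
  have "(j, 1) \<in> star_E n" "(1, i) \<in> star_E n" using assms by (auto simp: star_E_mem)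
  then show "(j, i) \<in> star_E n ^^ 2" by (auto simp: numeral_2_eq_2 relpow_1 intro: relcompI)
next
  fix m assume m: "(j, i) \<in> star_E n ^^ m"
  show "2 \<le> m"
  proof (rule ccontr)
    assume "\<not> 2 \<le> m" then have "m = 0 \<or> m = 1" by auto
    then show False using m assms by (auto simp: star_E_mem)
  qed
qed

lemma ball_center: assumes "n \<ge> 1"
  shows "ball_G (star_V n) (star_E n) 1 r = (if r < 1 then (if r \<ge> 0 then {1} else {}) else star_V n)"
proof -
  have d: "u \<in> star_V n \<Longrightarrow> real (graph_dist (star_E n) u 1) = (if u = 1 then 0 else 1)" for u
    using gd_self gd_one[of u n u 1] by (auto simp: star_V_def)
  have one: "1 \<in> star_V n" using assms by (simp add: star_V_def)
  show ?thesis
  proof (rule set_eqI)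
    fix u show "u \<in> ball_G (star_V n) (star_E n) 1 r \<longleftrightarrow> u \<in> (if r < 1 then (if r \<ge> 0 then {1} else {}) else star_V n)"
      unfolding ball_G_def using d[of u] one d[of 1] by (cases "u = 1") auto
  qed
qed

lemma ball_leaf: assumes "i \<in> {2..n}"
  shows "ball_G (star_V n) (star_E n) i r =
    (if r < 0 then {} else if r < 1 then {i} else if r < 2 then {1, i} else star_V n)"
proof -
  have d: "u \<in> star_V n \<Longrightarrow> real (graph_dist (star_E n) u i) = (if u = i then 0 else if u = 1 then 1 else 2)" for u
    using gd_self gd_one[of i n u i] gd_two[of i n u] assms by (auto simp: star_V_def)
  have one: "1 \<in> star_V n" "i \<in> star_V n" "i \<noteq> 1" using assms by (auto simp add: star_V_def)
  show ?thesis
  proof (rule set_eqI)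
    fix u show "u \<in> ball_G (star_V n) (star_E n) i r \<longleftrightarrow> u \<in> (if r < 0 then {} else if r < 1 then {i} else if r < 2 then {1, i} else star_V n)"
      unfolding ball_G_def using d[of u] one d[of 1] d[of i] by (cases "u = 1"; cases "u = i") auto
  qed
qed


definition av :: "nat \<Rightarrow> (nat \<Rightarrow> real) \<Rightarrow> real" where
  "av n f = (\<Sum>i\<in>{1..n}. \<bar>f i\<bar>) / real n"
definition Mcen :: "nat \<Rightarrow> (nat \<Rightarrow> real) \<Rightarrow> real" where
  "Mcen n f = max \<bar>f 1\<bar> (av n f)"
definition Mleaf :: "nat \<Rightarrow> (nat \<Rightarrow> real) \<Rightarrow> nat \<Rightarrow> real" where
  "Mleaf n f i = max (max \<bar>f i\<bar> ((\<bar>f 1\<bar> + \<bar>f i\<bar>) / 2)) (av n f)"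

lemma card_star_V: "card (star_V n) = n" by (simp add: star_V_def)

lemma sV: "(\<Sum>u\<in>star_V n. \<bar>f u\<bar>) / real (card (star_V n)) = av n f"
  by (simp add: av_def star_V_def)

lemma mop_center: assumes "n \<ge> 1"
  shows "maximal_op (star_V n) (star_E n) f 1 = Mcen n f"
proof -
  let ?h = "\<lambda>r. (\<Sum>u\<in>ball_G (star_V n) (star_E n) 1 r. \<bar>f u\<bar>) / real (card (ball_G (star_V n) (star_E n) 1 r))"
  have h: "?h r = (if r < 1 then \<bar>f 1\<bar> else av n f)" if r: "r \<ge> 0" for r
  proof -
    have b: "ball_G (star_V n) (star_E n) 1 r = (if r < 1 then {1} else star_V n)"
      using ball_center[OF assms, of r] r by simp
    show ?thesis unfolding b using sV[of f n] by (cases "r < 1") simp_all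
  qed
  show ?thesis unfolding maximal_op_def
  proof (rule cSup_eq_maximum)
    show "Mcen n f \<in> ?h ` {0..}"
    proof (cases "\<bar>f 1\<bar> \<ge> av n f")
      case True
      have "?h 0 = Mcen n f" using h[of 0] True unfolding Mcen_def by simp
      then show ?thesis by (intro image_eqI[of _ _ 0]) auto
    next
      case False
      have "?h 1 = Mcen n f" using h[of 1] False unfolding Mcen_def by simp
      then show ?thesis by (intro image_eqI[of _ _ 1]) auto
    qed
  next
    fix x assume "x \<in> ?h ` {0..}"
    then obtain r where "r \<ge> 0" "x = ?h r" by auto
    then show "x \<le> Mcen n f" using h[of r] unfolding Mcen_def by auto
  qed
qed

lemma mop_leaf: assumes "i \<in> {2..n}"
  shows "maximal_op (star_V n) (star_E n) f i = Mleaf n f i"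
proof -
  let ?h = "\<lambda>r. (\<Sum>u\<in>ball_G (star_V n) (star_E n) i r. \<bar>f u\<bar>) / real (card (ball_G (star_V n) (star_E n) i r))"
  have i1: "i \<noteq> 1" using assms by auto
  have h: "?h r = (if r < 1 then \<bar>f i\<bar> else if r < 2 then (\<bar>f 1\<bar> + \<bar>f i\<bar>) / 2 else av n f)" if r: "r \<ge> 0" for r
  proof -
    have b: "ball_G (star_V n) (star_E n) i r = (if r < 1 then {i} else if r < 2 then {1, i} else star_V n)"
      using ball_leaf[OF assms, of r] r by simp
    show ?thesis unfolding b using sV[of f n] i1 by (cases "r < 1"; cases "r < 2") simp_all
  qed
  have h0: "?h 0 = \<bar>f i\<bar>" using h[of 0] by simp
  have h1: "?h 1 = (\<bar>f 1\<bar> + \<bar>f i\<bar>) / 2" using h[of 1] by simp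
  have h2: "?h 2 = av n f" using h[of 2] by simp
  show ?thesis unfolding maximal_op_def
  proof (rule cSup_eq_maximum)
    show "Mleaf n f i \<in> ?h ` {0..}"
    proof (cases "Mleaf n f i = \<bar>f i\<bar>")
      case True then show ?thesis using h0 by (intro image_eqI[of _ _ 0]) auto
    next
      case F1: False
      show ?thesis
      proof (cases "Mleaf n f i = (\<bar>f 1\<bar> + \<bar>f i\<bar>) / 2")
        case True
        then have "Mleaf n f i = ?h 1" using h1 by linarith
        then show ?thesis by (intro image_eqI[of _ _ 1]) auto
      next
        case False then have "Mleaf n f i = av n f" using F1 unfolding Mleaf_def by linarith
        then show ?thesis using h2 by (intro image_eqI[of _ _ 2]) auto
      qed
    qed
  next
    fix x assume "x \<in> ?h ` {0..}"
    then obtain r where "r \<ge> 0" "x = ?h r" by auto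
    then show "x \<le> Mleaf n f i" using h[of r] unfolding Mleaf_def
      by (cases "r < 1"; cases "r < 2") (simp_all add: max_def)
  qed
qed

lemma powr_tangent:
  fixes a b p :: real
  assumes "p \<ge> 1" "a > 0" "b > 0"
  shows "a powr p + p * a powr (p - 1) * (b - a) \<le> b powr p"
proof -
  have d: "((\<lambda>x. x powr p) has_field_derivative p * a powr (p - 1)) (at a within {0<..})"
    using has_real_derivative_powr[OF assms(2), of p] by (rule has_field_derivative_at_within)
  have "(\<lambda>x. x powr p) b - (\<lambda>x. x powr p) a \<ge> p * a powr (p - 1) * (b - a)"
    by (rule convex_on_imp_above_tangent[OF powr_convex[OF assms(1)] _ _ _ d])
       (use assms in \<open>auto simp: convex_connected interior_open\<close>)
  then show ?thesis by simp
qed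

lemma powr_convex0:
  assumes "p \<ge> 1" shows "convex_on {0..} (\<lambda>x::real. x powr p)"
proof (rule convex_onI)
  fix t x y :: real
  assume t: "0 < t" "t < 1" and xy: "x \<in> {0..}" "y \<in> {0..}"
  have tp: "s powr p \<le> s" if "0 < s" "s \<le> 1" for s :: real
    using powr_le_one_le[OF that assms] .
  show "((1 - t) *\<^sub>R x + t *\<^sub>R y) powr p \<le> (1 - t) * x powr p + t * y powr p"
  proof (cases "x = 0")
    case True
    then show ?thesis using t xy tp[of t] by (simp add: powr_mult mult_right_mono)
  next
    case xn: False
    show ?thesis
    proof (cases "y = 0")
      case True
      then show ?thesis using t xy xn tp[of "1 - t"] by (simp add: powr_mult mult_right_mono)
    next
      case False
      then show ?thesis using xn xy t convex_onD[OF powr_convex[OF assms], of t x y] by auto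
    qed
  qed
qed (simp add: convex_real_interval)

lemma jensen_mean:
  assumes "finite S" "S \<noteq> {}" "\<And>i. i \<in> S \<Longrightarrow> x i \<ge> 0" "p \<ge> 1"
  shows "real (card S) * ((\<Sum>i\<in>S. x i) / real (card S)) powr p \<le> (\<Sum>i\<in>S. x i powr p)"
proof -
  have c: "real (card S) > 0" using assms by (simp add: card_gt_0_iff)
  have "(\<lambda>x. x powr p) (\<Sum>i\<in>S. (1 / real (card S)) *\<^sub>R x i) \<le> (\<Sum>i\<in>S. (1 / real (card S)) * (x i powr p))"
    by (rule convex_on_sum[OF assms(1,2) powr_convex0[OF assms(4)]]) (use assms c in auto)
  then have "((\<Sum>i\<in>S. x i) / real (card S)) powr p \<le> (\<Sum>i\<in>S. x i powr p) / real (card S)"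
    by (simp add: sum_divide_distrib[symmetric] sum_distrib_left[symmetric] divide_inverse mult.commute sum_distrib_right[symmetric])
  then show ?thesis using c by (simp add: field_simps)
qed

definition NUM :: "nat \<Rightarrow> real \<Rightarrow> (nat \<Rightarrow> real) \<Rightarrow> real" where
  "NUM n p f = Mcen n f powr p + (\<Sum>i\<in>{2..n}. Mleaf n f i powr p)"
definition DEN :: "nat \<Rightarrow> real \<Rightarrow> (nat \<Rightarrow> real) \<Rightarrow> real" where
  "DEN n p f = (\<Sum>i\<in>{1..n}. \<bar>f i\<bar> powr p)"
definition rho :: "nat \<Rightarrow> real \<Rightarrow> (nat \<Rightarrow> real) \<Rightarrow> real" where
  "rho n p f = NUM n p f / DEN n p f"
definition Qs :: "nat \<Rightarrow> (nat \<Rightarrow> real) set" where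
  "Qs n = PiE UNIV (\<lambda>i. if i = 1 then {1} else if i \<in> {2..n} then {0..1} else {0})"

lemma sum_split1: "(n::nat) \<ge> 1 \<Longrightarrow> (\<Sum>i\<in>{1..n}. g i) = g 1 + (\<Sum>i\<in>{2..n}. g i)"
proof -
  assume "n \<ge> 1"
  then have "{1..n} = insert 1 {2..n}" by auto
  then show ?thesis by simp
qed

lemma Qs_iff: assumes n1: "n \<ge> 1" shows "x \<in> Qs n \<longleftrightarrow> x 1 = 1 \<and> (\<forall>i\<in>{2..n}. 0 \<le> x i \<and> x i \<le> 1) \<and> (\<forall>i. i \<notin> {1..n} \<longrightarrow> x i = 0)"
proof -
  have "x \<in> Qs n \<longleftrightarrow> (\<forall>i. x i \<in> (if i = 1 then {1} else if i \<in> {2..n} then {0..1} else {0}))"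
    unfolding Qs_def PiE_UNIV_domain by (simp add: Pi_iff)
  also have "\<dots> \<longleftrightarrow> x 1 = 1 \<and> (\<forall>i\<in>{2..n}. 0 \<le> x i \<and> x i \<le> 1) \<and> (\<forall>i. i \<notin> {1..n} \<longrightarrow> x i = 0)"
  proof
    assume h: "\<forall>i. x i \<in> (if i = 1 then {1} else if i \<in> {2..n} then {0..1::real} else {0})"
    have "x 1 = 1" using h[rule_format, of 1] by simp
    moreover have "\<forall>i\<in>{2..n}. 0 \<le> x i \<and> x i \<le> 1"
    proof
      fix i :: nat assume "i \<in> {2..n}" then show "0 \<le> x i \<and> x i \<le> 1" using h[rule_format, of i] by auto
    qed
    moreover have "\<forall>i. i \<notin> {1..n} \<longrightarrow> x i = 0"
    proof (intro allI impI)
      fix i :: nat assume "i \<notin> {1..n}" then show "x i = 0" using h[rule_format, of i] n1 by auto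
    qed
    ultimately show "x 1 = 1 \<and> (\<forall>i\<in>{2..n}. 0 \<le> x i \<and> x i \<le> 1) \<and> (\<forall>i. i \<notin> {1..n} \<longrightarrow> x i = 0)" by blast
  next
    assume h: "x 1 = 1 \<and> (\<forall>i\<in>{2..n}. 0 \<le> x i \<and> x i \<le> 1) \<and> (\<forall>i. i \<notin> {1..n} \<longrightarrow> x i = 0)"
    show "\<forall>i. x i \<in> (if i = 1 then {1} else if i \<in> {2..n} then {0..1::real} else {0})"
    proof
      fix i :: nat
      consider "i = 1" | "i \<in> {2..n}" | "i \<notin> {1..n}" by fastforce
      then show "x i \<in> (if i = 1 then {1} else if i \<in> {2..n} then {0..1::real} else {0})"
        using h n1 by cases auto
    qed
  qed
  finally show ?thesis .
qed

lemma Qs_compact: "compact (Qs n)"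
proof -
  have "compactin (product_topology (\<lambda>i. euclidean) UNIV) (Qs n)"
    unfolding Qs_def by (subst compactin_PiE) auto
  then show ?thesis by (simp add: euclidean_product_topology)
qed

lemma ratio_eq:
  assumes "n \<ge> 1" "p > 0"
  shows "pnorm (star_V n) p (maximal_op (star_V n) (star_E n) f) / pnorm (star_V n) p f = rho n p f powr (1 / p)"
proof -
  have mc: "Mcen n f \<ge> 0" unfolding Mcen_def by auto
  have ml: "Mleaf n f i \<ge> 0" for i unfolding Mleaf_def by auto
  have "(\<Sum>v\<in>star_V n. \<bar>maximal_op (star_V n) (star_E n) f v\<bar> powr p) = NUM n p f"
  proof -
    have "(\<Sum>v\<in>star_V n. \<bar>maximal_op (star_V n) (star_E n) f v\<bar> powr p)
      = \<bar>maximal_op (star_V n) (star_E n) f 1\<bar> powr p + (\<Sum>v\<in>{2..n}. \<bar>maximal_op (star_V n) (star_E n) f v\<bar> powr p)"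
      unfolding star_V_def by (rule sum_split1[OF assms(1)])
    also have "(\<Sum>v\<in>{2..n}. \<bar>maximal_op (star_V n) (star_E n) f v\<bar> powr p) = (\<Sum>v\<in>{2..n}. Mleaf n f v powr p)"
      by (rule sum.cong) (use ml in \<open>auto simp: mop_leaf\<close>)
    also have "\<bar>maximal_op (star_V n) (star_E n) f 1\<bar> = Mcen n f" using mc mop_center[OF assms(1)] by simp
    finally show ?thesis unfolding NUM_def .
  qed
  then show ?thesis unfolding pnorm_def rho_def DEN_def
    by (simp add: star_V_def powr_divide)
qed


context
  fixes n :: nat and p :: real and x :: "nat \<Rightarrow> real"
  assumes n1: "n \<ge> 1" and xQ: "x \<in> Qs n"
begin

lemma q1: "x 1 = 1" using xQ Qs_iff[OF n1] by auto
lemma q2: "i \<in> {2..n} \<Longrightarrow> 0 \<le> x i \<and> x i \<le> 1" using xQ Qs_iff[OF n1] by auto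

lemma av_Q: "av n x = (1 + (\<Sum>i\<in>{2..n}. x i)) / real n"
proof -
  have "(\<Sum>i\<in>{1..n}. \<bar>x i\<bar>) = \<bar>x 1\<bar> + (\<Sum>i\<in>{2..n}. \<bar>x i\<bar>)" by (rule sum_split1[OF n1])
  also have "(\<Sum>i\<in>{2..n}. \<bar>x i\<bar>) = (\<Sum>i\<in>{2..n}. x i)" by (rule sum.cong) (use q2 in auto)
  finally show ?thesis unfolding av_def using q1 by simp
qed

lemma av_bounds: "0 < av n x" "av n x \<le> 1"
proof -
  have s0: "(\<Sum>i\<in>{2..n}. x i) \<ge> 0" by (rule sum_nonneg) (use q2 in auto)
  have "(\<Sum>i\<in>{2..n}. x i) \<le> (\<Sum>i\<in>{2..n}. 1)" by (rule sum_mono) (use q2 in auto)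
  also have "\<dots> = real n - 1" using n1 by simp
  finally have s1: "(\<Sum>i\<in>{2..n}. x i) \<le> real n - 1" .
  have np: "real n > 0" using n1 by simp
  show "0 < av n x" unfolding av_Q using s0 np by simp
  show "av n x \<le> 1" unfolding av_Q using s1 np by simp
qed

lemma Mcen_Q: "Mcen n x = 1" unfolding Mcen_def using q1 av_bounds by simp

lemma Mleaf_Q: "i \<in> {2..n} \<Longrightarrow> Mleaf n x i = max ((1 + x i) / 2) (av n x)"
  unfolding Mleaf_def using q1 q2[of i] by (simp add: max_def)

lemma DEN_Q: "DEN n p x = 1 + (\<Sum>i\<in>{2..n}. x i powr p)"
proof -
  have "DEN n p x = \<bar>x 1\<bar> powr p + (\<Sum>i\<in>{2..n}. \<bar>x i\<bar> powr p)" unfolding DEN_def by (rule sum_split1[OF n1])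
  also have "(\<Sum>i\<in>{2..n}. \<bar>x i\<bar> powr p) = (\<Sum>i\<in>{2..n}. x i powr p)" by (rule sum.cong) (use q2 in auto)
  finally show ?thesis using q1 by simp
qed

lemma NUM_Q: "NUM n p x = 1 + (\<Sum>i\<in>{2..n}. max ((1 + x i) / 2) (av n x) powr p)"
  unfolding NUM_def Mcen_Q by (simp add: Mleaf_Q)

lemma DEN_Q_pos: "DEN n p x \<ge> 1"
proof -
  have "(\<Sum>i\<in>{2..n}. x i powr p) \<ge> 0" by (rule sum_nonneg) auto
  then show ?thesis unfolding DEN_Q by simp
qed

end

lemma rho_cont:
  assumes n1: "n \<ge> 1" and p: "p \<ge> 1"
  shows "continuous_on (Qs n) (rho n p)"
proof -
  have c: "continuous_on (Qs n) (\<lambda>x. x i)" for i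
    by (rule continuous_on_subset[OF continuous_on_product_coordinates]) auto
  have cav: "continuous_on (Qs n) (\<lambda>x. av n x)" unfolding av_def by (intro continuous_intros c) (use n1 in auto)
  have cN: "continuous_on (Qs n) (NUM n p)" unfolding NUM_def Mcen_def Mleaf_def
    by (intro continuous_intros continuous_on_powr' c cav) (use p in \<open>auto simp: av_def\<close>)
  have cD: "continuous_on (Qs n) (DEN n p)" unfolding DEN_def
    by (intro continuous_intros continuous_on_powr' c) (use p in auto)
  have "continuous_on (Qs n) (\<lambda>x. NUM n p x / DEN n p x)"
  proof (intro continuous_on_divide cN cD ballI)
    fix x assume "x \<in> Qs n"
    then have "DEN n p x \<ge> 1" by (rule DEN_Q_pos[OF n1])
    then show "DEN n p x \<noteq> 0" by simp
  qed
  then show ?thesis unfolding rho_def[abs_def] .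
qed

lemma DEN_nonneg: "DEN n p f \<ge> 0" unfolding DEN_def by (rule sum_nonneg) auto
lemma NUM_nonneg: "NUM n p f \<ge> 0" unfolding NUM_def by (intro add_nonneg_nonneg sum_nonneg) auto

lemma DEN_pos:
  assumes "v \<in> star_V n" "f v \<noteq> 0"
  shows "DEN n p f > 0"
proof -
  have "0 < \<bar>f v\<bar> powr p" using assms by simp
  also have "\<dots> \<le> DEN n p f" unfolding DEN_def
    by (rule member_le_sum) (use assms in \<open>auto simp: star_V_def\<close>)
  finally show ?thesis .
qed

lemma scale_rho:
  fixes g :: "nat \<Rightarrow> real"
  assumes c: "c > 0" and n1: "n \<ge> 1"
  defines "y \<equiv> \<lambda>i. if i \<in> {1..n} then c * \<bar>g i\<bar> else 0"
  shows "rho n p y = rho n p g"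
proof -
  have y1: "\<bar>y i\<bar> = c * \<bar>g i\<bar>" if "i \<in> {1..n}" for i using that c unfolding y_def by (simp add: abs_mult)
  have one: "(1::nat) \<in> {1..n}" using n1 by simp
  have s1: "(\<Sum>i\<in>{1..n}. \<bar>y i\<bar>) = (\<Sum>i\<in>{1..n}. c * \<bar>g i\<bar>)"
    by (rule sum.cong[OF refl]) (rule y1)
  have avy: "av n y = c * av n g" unfolding av_def s1 sum_distrib_left[symmetric] by simp
  have mc: "Mcen n y = c * Mcen n g" unfolding Mcen_def avy using y1[OF one] c
    by (simp add: max_mult_distrib_left)
  have ml: "Mleaf n y i = c * Mleaf n g i" if "i \<in> {2..n}" for i
  proof -
    have "i \<in> {1..n}" using that by auto
    then show ?thesis unfolding Mleaf_def avy using y1[OF one] y1[of i] c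
      by (simp add: max_mult_distrib_left distrib_left[symmetric])
  qed
  have s2: "(\<Sum>i\<in>{2..n}. Mleaf n y i powr p) = (\<Sum>i\<in>{2..n}. c powr p * Mleaf n g i powr p)"
    by (rule sum.cong[OF refl]) (simp add: ml powr_mult)
  have num: "NUM n p y = c powr p * NUM n p g" unfolding NUM_def s2
    by (simp add: mc powr_mult sum_distrib_left distrib_left)
  have s3: "(\<Sum>i\<in>{1..n}. \<bar>y i\<bar> powr p) = (\<Sum>i\<in>{1..n}. c powr p * \<bar>g i\<bar> powr p)"
    by (rule sum.cong[OF refl]) (simp add: y1 powr_mult)
  have den: "DEN n p y = c powr p * DEN n p g" unfolding DEN_def s3
    by (simp add: sum_distrib_left)
  show ?thesis unfolding rho_def num den using c by simp
qed

definition sw :: "nat \<Rightarrow> nat \<Rightarrow> nat" where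
  "sw j i = (if i = 1 then j else if i = j then 1 else i)"

lemma sw_bij: "j \<in> {1..n} \<Longrightarrow> bij_betw (sw j) {1..n} {1..n}"
  by (rule bij_betw_byWitness[of _ "sw j"]) (auto simp: sw_def)

lemma swap_rho:
  assumes n1: "n \<ge> 1" and j: "j \<in> {2..n}" and jm: "\<And>i. i \<in> {1..n} \<Longrightarrow> \<bar>g i\<bar> \<le> \<bar>g j\<bar>"
    and dpos: "DEN n p g > 0" and p: "p > 0"
  shows "rho n p g \<le> rho n p (\<lambda>i. g (sw j i))"
proof -
  let ?b = "\<lambda>i. g (sw j i)"
  have j1: "j \<in> {1..n}" "j \<noteq> 1" using j by auto
  have reidx: "(\<Sum>i\<in>{1..n}. h (g (sw j i))) = (\<Sum>i\<in>{1..n}. h (g i))" for h :: "real \<Rightarrow> real"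
    using sum.reindex_bij_betw[OF sw_bij[OF j1(1)], of "\<lambda>i. h (g i)"] by simp
  have den: "DEN n p ?b = DEN n p g" unfolding DEN_def by (rule reidx)
  have avb: "av n ?b = av n g" unfolding av_def using reidx[of abs] by simp
  have g1: "\<bar>g 1\<bar> \<le> \<bar>g j\<bar>" using jm n1 by simp
  have mcb: "Mcen n ?b = Mleaf n g j" unfolding Mcen_def Mleaf_def avb using g1 j1
    by (simp add: sw_def max_def)
  have mlb: "Mcen n g \<le> Mleaf n ?b j" unfolding Mcen_def Mleaf_def avb using j1
    by (simp add: sw_def max_def)
  have mli: "Mleaf n g i \<le> Mleaf n ?b i" if "i \<in> {2..n}" "i \<noteq> j" for i
    unfolding Mleaf_def avb using that j1 g1 by (simp add: sw_def max_def)
  have split: "(\<Sum>i\<in>{2..n}. h i) = h j + (\<Sum>i\<in>{2..n} - {j}. h i)" for h :: "nat \<Rightarrow> real"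
    by (rule sum.remove) (use j in auto)
  have "NUM n p g = Mcen n g powr p + Mleaf n g j powr p + (\<Sum>i\<in>{2..n} - {j}. Mleaf n g i powr p)"
    unfolding NUM_def split by simp
  also have "\<dots> \<le> Mleaf n ?b j powr p + Mcen n ?b powr p + (\<Sum>i\<in>{2..n} - {j}. Mleaf n ?b i powr p)"
  proof (intro add_mono sum_mono)
    show "Mcen n g powr p \<le> Mleaf n ?b j powr p" using mlb p by (intro powr_mono2) (auto simp: Mcen_def)
    show "Mleaf n g j powr p \<le> Mcen n ?b powr p" using mcb by simp
    fix i assume "i \<in> {2..n} - {j}"
    then show "Mleaf n g i powr p \<le> Mleaf n ?b i powr p" using mli[of i] p
      by (intro powr_mono2) (auto simp: Mleaf_def)
  qed
  also have "\<dots> = NUM n p ?b" unfolding NUM_def split by simp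
  finally have "NUM n p g \<le> NUM n p ?b" .
  then show ?thesis unfolding rho_def den using dpos by (simp add: divide_right_mono)
qed


lemma reduce_to_Q:
  assumes n1: "n \<ge> 1" and p: "p > 0" and v: "v \<in> star_V n" "f v \<noteq> 0"
  shows "\<exists>y\<in>Qs n. rho n p f \<le> rho n p y"
proof -
  let ?S = "{1..n}"
  obtain j where j: "j \<in> ?S" and jm: "\<And>i. i \<in> ?S \<Longrightarrow> \<bar>f i\<bar> \<le> \<bar>f j\<bar>"
  proof -
    have "finite ((\<lambda>i. \<bar>f i\<bar>) ` ?S)" "(\<lambda>i. \<bar>f i\<bar>) ` ?S \<noteq> {}" using n1 by auto
    then have "Max ((\<lambda>i. \<bar>f i\<bar>) ` ?S) \<in> (\<lambda>i. \<bar>f i\<bar>) ` ?S" by (rule Max_in)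
    then obtain j where "j \<in> ?S" "\<bar>f j\<bar> = Max ((\<lambda>i. \<bar>f i\<bar>) ` ?S)" by auto
    then show ?thesis using that by (metis Max_ge finite_atLeastAtMost finite_imageI imageI)
  qed
  have vS: "v \<in> ?S" using v by (simp add: star_V_def)
  have Mpos: "\<bar>f j\<bar> > 0" using jm[OF vS] v by linarith
  define g where "g = (if j = 1 then f else (\<lambda>i. f (sw j i)))"
  have fg: "rho n p f \<le> rho n p g"
  proof (cases "j = 1")
    case True then show ?thesis unfolding g_def by simp
  next
    case False
    then have j2: "j \<in> {2..n}" using j by auto
    show ?thesis unfolding g_def using False swap_rho[of n j f p, OF n1 j2 jm DEN_pos[of v n f p, OF v] p] by auto
  qed
  have g1: "\<bar>g 1\<bar> = \<bar>f j\<bar>" unfolding g_def by (simp add: sw_def)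
  have gS: "\<bar>g i\<bar> \<le> \<bar>f j\<bar>" if "i \<in> ?S" for i
  proof (cases "j = 1")
    case True then show ?thesis unfolding g_def using jm that by simp
  next
    case False
    have "sw j i \<in> ?S" using that j by (auto simp: sw_def)
    then show ?thesis unfolding g_def using False jm by simp
  qed
  define y where "y = (\<lambda>i. if i \<in> ?S then (1 / \<bar>f j\<bar>) * \<bar>g i\<bar> else 0)"
  have ry: "rho n p y = rho n p g" unfolding y_def using scale_rho[where c = "1 / \<bar>f j\<bar>" and n = n and g = g and p = p] Mpos n1 by simp
  have ya: "y 1 = 1" unfolding y_def using g1 Mpos n1 by simp
  have yb: "\<forall>i\<in>{2..n}. 0 \<le> y i \<and> y i \<le> 1"
  proof
    fix i assume i: "i \<in> {2..n}"
    then have "i \<in> ?S" by auto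
    then show "0 \<le> y i \<and> y i \<le> 1" unfolding y_def using gS[of i] Mpos by simp
  qed
  have yc: "\<forall>i. i \<notin> ?S \<longrightarrow> y i = 0" unfolding y_def by simp
  have yQ: "y \<in> Qs n" unfolding Qs_iff[OF n1] using ya yb yc by blast
  show ?thesis using yQ fg ry by (intro bexI[of _ y]) auto
qed

lemma sum_diff_on:
  fixes a b :: "nat \<Rightarrow> real" and h :: "real \<Rightarrow> real"
  assumes "W \<subseteq> I" "finite I" "\<And>i. i \<in> I - W \<Longrightarrow> a i = b i"
  shows "(\<Sum>i\<in>I. h (a i)) = (\<Sum>i\<in>I. h (b i)) + (\<Sum>i\<in>W. h (a i) - h (b i))"
proof -
  have "(\<Sum>i\<in>I. h (a i) - h (b i)) = (\<Sum>i\<in>W. h (a i) - h (b i))"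
  proof (rule sum.mono_neutral_right)
    show "\<forall>i\<in>I - W. h (a i) - h (b i) = 0" using assms(3) by simp
  qed (use assms in auto)
  then show ?thesis by (simp add: sum_subtractf)
qed

lemma generic_step:
  fixes n :: nat and p R :: real and x0 x' :: "nat \<Rightarrow> real"
  assumes n1: "n \<ge> 1" and p1: "p \<ge> 1" and x0Q: "x0 \<in> Qs n" and x'Q: "x' \<in> Qs n"
    and WU: "W \<subseteq> {i\<in>{2..n}. \<not> (1 + x0 i) / 2 \<le> av n x0}"
    and same: "\<And>i. i \<in> {2..n} - W \<Longrightarrow> x' i = x0 i"
  shows "NUM n p x' - R * DEN n p x' \<ge> NUM n p x0 - R * DEN n p x0
     + (\<Sum>i\<in>W. (((1 + x' i) / 2) powr p - R * x' i powr p) - (((1 + x0 i) / 2) powr p - R * x0 i powr p))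
     + real (card {i\<in>{2..n}. (1 + x0 i) / 2 \<le> av n x0}) * (p * av n x0 powr (p - 1)) * ((\<Sum>i\<in>W. x' i - x0 i) / real n)"
proof -
  let ?I = "{2..n}"
  let ?L = "{i\<in>?I. (1 + x0 i) / 2 \<le> av n x0}"
  let ?Az = "av n x0"
  let ?A = "av n x'"
  let ?c = "p * ?Az powr (p - 1) * (?A - ?Az)"
  have WI: "W \<subseteq> ?I" using WU by auto
  have WL: "W \<inter> ?L = {}" using WU by auto
  have fin: "finite ?I" "finite W" using WI finite_subset by auto
  have A0pos: "?Az > 0" using av_bounds[OF n1 x0Q] by simp
  have Apos: "?A > 0" using av_bounds[OF n1 x'Q] by simp
  have sumx: "(\<Sum>i\<in>?I. x' i) = (\<Sum>i\<in>?I. x0 i) + (\<Sum>i\<in>W. x' i - x0 i)"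
    using sum_diff_on[OF WI fin(1), of x' x0 "\<lambda>t. t"] same by simp
  have Adiff: "?A - ?Az = (\<Sum>i\<in>W. x' i - x0 i) / real n"
    unfolding av_Q[OF n1 x0Q] av_Q[OF n1 x'Q] sumx by (simp add: diff_divide_distrib add_divide_distrib)
  define \<delta> where "\<delta> i = (if i \<in> W then ((1 + x' i) / 2) powr p - ((1 + x0 i) / 2) powr p else 0)
      + (if i \<in> ?L then ?c else 0)" for i
  have tm: "max ((1 + x0 i) / 2) ?Az powr p + \<delta> i \<le> max ((1 + x' i) / 2) ?A powr p" if i: "i \<in> ?I" for i
  proof (cases "i \<in> W")
    case True
    then have nL: "i \<notin> ?L" using WL by auto
    have "\<not> (1 + x0 i) / 2 \<le> ?Az" using True WU by auto
    then have m0: "max ((1 + x0 i) / 2) ?Az = (1 + x0 i) / 2" by simp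
    have "((1 + x' i) / 2) powr p \<le> max ((1 + x' i) / 2) ?A powr p"
      using q2[OF n1 x'Q i] p1 by (intro powr_mono2) auto
    moreover have "\<delta> i = ((1 + x' i) / 2) powr p - ((1 + x0 i) / 2) powr p + 0"
      unfolding \<delta>_def by (simp only: if_P[OF True] if_not_P[OF nL])
    ultimately show ?thesis unfolding m0 by simp
  next
    case nW: False
    then have xi: "x' i = x0 i" using same i by auto
    show ?thesis
    proof (cases "i \<in> ?L")
      case True
      then have m0: "max ((1 + x0 i) / 2) ?Az = ?Az" by simp
      have "?Az powr p + ?c \<le> ?A powr p" by (rule powr_tangent[OF p1 A0pos Apos])
      also have "\<dots> \<le> max ((1 + x' i) / 2) ?A powr p" using Apos p1 by (intro powr_mono2) auto
      moreover have "\<delta> i = 0 + ?c"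
        unfolding \<delta>_def by (simp only: if_P[OF True] if_not_P[OF nW])
      ultimately show ?thesis unfolding m0 by simp
    next
      case False
      then have "\<not> (1 + x0 i) / 2 \<le> ?Az" using i by auto
      then have m0: "max ((1 + x0 i) / 2) ?Az = (1 + x0 i) / 2" by simp
      have "((1 + x0 i) / 2) powr p \<le> max ((1 + x' i) / 2) ?A powr p"
        using q2[OF n1 x0Q i] p1 xi by (intro powr_mono2) auto
      moreover have "\<delta> i = 0 + 0"
        unfolding \<delta>_def by (simp only: if_not_P[OF False] if_not_P[OF nW])
      ultimately show ?thesis unfolding m0 by simp
    qed
  qed
  have sd: "(\<Sum>i\<in>?I. \<delta> i) = (\<Sum>i\<in>W. ((1 + x' i) / 2) powr p - ((1 + x0 i) / 2) powr p) + real (card ?L) * ?c"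
  proof -
    have "(\<Sum>i\<in>?I. \<delta> i) = (\<Sum>i\<in>?I. (if i \<in> W then ((1 + x' i) / 2) powr p - ((1 + x0 i) / 2) powr p else 0))
        + (\<Sum>i\<in>?I. (if i \<in> ?L then ?c else 0))" unfolding \<delta>_def by (simp add: sum.distrib)
    also have "(\<Sum>i\<in>?I. (if i \<in> W then ((1 + x' i) / 2) powr p - ((1 + x0 i) / 2) powr p else 0))
        = (\<Sum>i\<in>?I \<inter> W. ((1 + x' i) / 2) powr p - ((1 + x0 i) / 2) powr p)"
      by (rule sum.inter_restrict[symmetric]) simp
    also have "?I \<inter> W = W" using WI by auto
    also have "(\<Sum>i\<in>?I. (if i \<in> ?L then ?c else 0)) = (\<Sum>i\<in>?I \<inter> ?L. ?c)"
      by (rule sum.inter_restrict[symmetric]) simp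
    also have "?I \<inter> ?L = ?L" by auto
    finally show ?thesis by simp
  qed
  have num: "NUM n p x0 + (\<Sum>i\<in>?I. \<delta> i) \<le> NUM n p x'"
    unfolding NUM_Q[OF n1 x0Q] NUM_Q[OF n1 x'Q]
    using sum_mono[of ?I "\<lambda>i. max ((1 + x0 i) / 2) ?Az powr p + \<delta> i" "\<lambda>i. max ((1 + x' i) / 2) ?A powr p", OF tm]
    by (simp add: sum.distrib)
  have den: "DEN n p x' = DEN n p x0 + (\<Sum>i\<in>W. x' i powr p - x0 i powr p)"
    unfolding DEN_Q[OF n1 x0Q] DEN_Q[OF n1 x'Q]
    using sum_diff_on[OF WI fin(1), of x' x0 "\<lambda>t. t powr p"] same by simp
  have "NUM n p x' - R * DEN n p x' \<ge> NUM n p x0 + (\<Sum>i\<in>?I. \<delta> i) - R * DEN n p x'" using num by simp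
  also have "NUM n p x0 + (\<Sum>i\<in>?I. \<delta> i) - R * DEN n p x' = NUM n p x0 - R * DEN n p x0
     + (\<Sum>i\<in>W. (((1 + x' i) / 2) powr p - R * x' i powr p) - (((1 + x0 i) / 2) powr p - R * x0 i powr p))
     + real (card ?L) * (p * ?Az powr (p - 1)) * ((\<Sum>i\<in>W. x' i - x0 i) / real n)"
    unfolding sd den Adiff
    by (simp add: algebra_simps sum_subtractf sum_distrib_left sum.distrib)
  finally show ?thesis .
qed

lemma U_step:
  fixes n :: nat and p :: real and x0 :: "nat \<Rightarrow> real"
  assumes n1: "n \<ge> 1" and p1: "p \<ge> 1" and x0Q: "x0 \<in> Qs n"
    and mx: "\<forall>x\<in>Qs n. rho n p x \<le> rho n p x0"
  shows "\<exists>x1\<in>Qs n. rho n p x0 \<le> rho n p x1 \<and> (\<exists>w. \<forall>i\<in>{2..n}. x1 i = w \<or> (1 + x1 i) / 2 \<le> av n x1)"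
proof -
  let ?I = "{2..n}"
  define R where "R = rho n p x0"
  define A0 where "A0 = av n x0"
  define U where "U = {i\<in>?I. \<not> (1 + x0 i) / 2 \<le> A0}"
  define L where "L = {i\<in>?I. (1 + x0 i) / 2 \<le> A0}"
  have Phi: "NUM n p x - R * DEN n p x \<le> 0" if "x \<in> Qs n" for x
  proof -
    have d: "DEN n p x \<ge> 1" by (rule DEN_Q_pos[OF n1 that])
    have "NUM n p x / DEN n p x \<le> R" using mx that unfolding R_def rho_def by auto
    then have "NUM n p x \<le> R * DEN n p x" using d by (simp add: pos_divide_le_eq)
    then show ?thesis by simp
  qed
  have Phi0: "NUM n p x0 - R * DEN n p x0 = 0"
  proof -
    have d: "DEN n p x0 \<ge> 1" by (rule DEN_Q_pos[OF n1 x0Q])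
    then show ?thesis unfolding R_def rho_def by simp
  qed
  show ?thesis
  proof (cases "U = {}")
    case True
    have "\<forall>i\<in>?I. x0 i = 0 \<or> (1 + x0 i) / 2 \<le> av n x0"
      using True unfolding U_def A0_def by auto
    then show ?thesis using x0Q by (intro bexI[of _ x0]) auto
  next
    case False
    have finU: "finite U" unfolding U_def by simp
    define ys where "ys = Max (x0 ` U)"
    have "ys \<in> x0 ` U" unfolding ys_def using finU False by (intro Max_in) auto
    then obtain j0 where j0: "j0 \<in> U" "x0 j0 = ys" by auto
    have ysmax: "x0 i \<le> ys" if "i \<in> U" for i unfolding ys_def using finU that by (intro Max_ge) auto
    have j0I: "j0 \<in> ?I" using j0 unfolding U_def by auto
    have ys01: "0 \<le> ys" "ys \<le> 1" using q2[OF n1 x0Q j0I] j0 by auto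
    define c where "c = real (card L) * (p * A0 powr (p - 1))"
    define G where "G y = ((1 + y) / 2) powr p - R * y powr p + c / real n * y" for y
    have UL: "U = {i\<in>?I. \<not> (1 + x0 i) / 2 \<le> av n x0}" "L = {i\<in>?I. (1 + x0 i) / 2 \<le> av n x0}"
      unfolding U_def L_def A0_def by auto
    have cc: "real (card {i\<in>?I. (1 + x0 i) / 2 \<le> av n x0}) * (p * av n x0 powr (p - 1)) = c"
      unfolding c_def L_def A0_def ..
    have claim: "G y \<le> G ys" if y: "0 \<le> y" "y \<le> 1" for y
    proof -
      define xy where "xy = x0(j0 := y)"
      have xyQ: "xy \<in> Qs n" unfolding Qs_iff[OF n1] xy_def
        using x0Q j0I y unfolding Qs_iff[OF n1] by auto
      have gs: "NUM n p xy - R * DEN n p xy \<ge> NUM n p x0 - R * DEN n p x0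
         + (\<Sum>i\<in>{j0}. (((1 + xy i) / 2) powr p - R * xy i powr p) - (((1 + x0 i) / 2) powr p - R * x0 i powr p))
         + real (card {i\<in>?I. (1 + x0 i) / 2 \<le> av n x0}) * (p * av n x0 powr (p - 1)) * ((\<Sum>i\<in>{j0}. xy i - x0 i) / real n)"
        by (rule generic_step[OF n1 p1 x0Q xyQ]) (use j0 UL in \<open>auto simp: xy_def\<close>)
      have xyj: "xy j0 = y" unfolding xy_def by simp
      have gs2: "NUM n p xy - R * DEN n p xy \<ge> NUM n p x0 - R * DEN n p x0
         + ((((1 + y) / 2) powr p - R * y powr p) - (((1 + ys) / 2) powr p - R * ys powr p))
         + c * ((y - ys) / real n)"
        using gs unfolding cc by (simp add: xyj j0(2))
      have e: "c * ((y - ys) / real n) = c / real n * y - c / real n * ys"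
        by (simp add: diff_divide_distrib right_diff_distrib)
      show ?thesis using gs2 Phi[OF xyQ] Phi0 e unfolding G_def by linarith
    qed
    define x1 where "x1 = (\<lambda>i. if i \<in> U then ys else x0 i)"
    have UI: "U \<subseteq> ?I" unfolding U_def by auto
    have x1Q: "x1 \<in> Qs n" unfolding Qs_iff[OF n1] x1_def
      using x0Q ys01 UI unfolding Qs_iff[OF n1] by auto
    have gs: "NUM n p x1 - R * DEN n p x1 \<ge> NUM n p x0 - R * DEN n p x0
         + (\<Sum>i\<in>U. (((1 + x1 i) / 2) powr p - R * x1 i powr p) - (((1 + x0 i) / 2) powr p - R * x0 i powr p))
         + real (card {i\<in>?I. (1 + x0 i) / 2 \<le> av n x0}) * (p * av n x0 powr (p - 1)) * ((\<Sum>i\<in>U. x1 i - x0 i) / real n)"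
      by (rule generic_step[OF n1 p1 x0Q x1Q]) (use UL in \<open>auto simp: x1_def\<close>)
    have eq: "(\<Sum>i\<in>U. (((1 + x1 i) / 2) powr p - R * x1 i powr p) - (((1 + x0 i) / 2) powr p - R * x0 i powr p))
         + c * ((\<Sum>i\<in>U. x1 i - x0 i) / real n) = (\<Sum>i\<in>U. G ys - G (x0 i))"
    proof -
      have e1: "c * ((\<Sum>i\<in>U. x1 i - x0 i) / real n) = (\<Sum>i\<in>U. c / real n * (x1 i - x0 i))"
        by (simp add: sum_distrib_left[symmetric] sum_divide_distrib[symmetric])
      show ?thesis unfolding e1 sum.distrib[symmetric]
        by (rule sum.cong[OF refl]) (simp add: G_def x1_def algebra_simps diff_divide_distrib)
    qed
    have "(\<Sum>i\<in>U. G ys - G (x0 i)) \<ge> 0"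
    proof (rule sum_nonneg)
      fix i assume "i \<in> U"
      then have "i \<in> ?I" using UI by auto
      then show "0 \<le> G ys - G (x0 i)" using claim q2[OF n1 x0Q] by simp
    qed
    then have "NUM n p x1 - R * DEN n p x1 \<ge> 0"
      using gs[unfolded cc] eq Phi0 by linarith
    moreover have "DEN n p x1 > 0" using DEN_Q_pos[OF n1 x1Q, of p] by simp
    ultimately have "R \<le> rho n p x1" unfolding rho_def
      by (simp add: pos_le_divide_eq)
    moreover have "\<forall>i\<in>?I. x1 i = ys \<or> (1 + x1 i) / 2 \<le> av n x1"
    proof
      fix i assume i: "i \<in> ?I"
      have "(\<Sum>i\<in>?I. x0 i) \<le> (\<Sum>i\<in>?I. x1 i)"
        by (rule sum_mono) (use ysmax in \<open>auto simp: x1_def\<close>)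
      then have "A0 \<le> av n x1" unfolding A0_def av_Q[OF n1 x0Q] av_Q[OF n1 x1Q]
        by (simp add: divide_right_mono)
      then show "x1 i = ys \<or> (1 + x1 i) / 2 \<le> av n x1"
        using i unfolding x1_def U_def by auto
    qed
    ultimately show ?thesis using x1Q unfolding R_def by blast
  qed
qed

lemma avg_step:
  fixes n :: nat and p :: real and x :: "nat \<Rightarrow> real"
  assumes n1: "n \<ge> 1" and p1: "p \<ge> 1" and xQ: "x \<in> Qs n"
    and P: "\<forall>i\<in>{2..n}. x i = w \<or> (1 + x i) / 2 \<le> av n x"
  shows "\<exists>x2\<in>Qs n. rho n p x \<le> rho n p x2 \<and> (\<exists>z. \<forall>i\<in>{2..n}. x2 i \<in> {z, w})"
proof -
  let ?I = "{2..n}"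
  define L where "L = {i\<in>?I. (1 + x i) / 2 \<le> av n x}"
  show ?thesis
  proof (cases "L = {}")
    case True
    then have "\<forall>i\<in>?I. x i \<in> {w, w}" using P unfolding L_def by auto
    then show ?thesis using xQ by (intro bexI[of _ x]) auto
  next
    case False
    have LI: "L \<subseteq> ?I" unfolding L_def by auto
    have finL: "finite L" unfolding L_def by simp
    have cL: "real (card L) > 0" using False finL by (simp add: card_gt_0_iff)
    define z where "z = (\<Sum>i\<in>L. x i) / real (card L)"
    have xL: "0 \<le> x i \<and> x i \<le> 1" if "i \<in> L" for i using q2[OF n1 xQ] LI that by auto
    have z0: "0 \<le> z" unfolding z_def using xL by (intro divide_nonneg_nonneg sum_nonneg) auto
    have "(\<Sum>i\<in>L. x i) \<le> (\<Sum>i\<in>L. 1)" by (rule sum_mono) (use xL in auto)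
    then have z1: "z \<le> 1" unfolding z_def using cL by (simp add: divide_le_eq)
    have zL: "real (card L) * z = (\<Sum>i\<in>L. x i)" unfolding z_def using cL by simp
    define x2 where "x2 = (\<lambda>i. if i \<in> L then z else x i)"
    have x2Q: "x2 \<in> Qs n" unfolding Qs_iff[OF n1] x2_def
      using xQ z0 z1 LI unfolding Qs_iff[OF n1] by auto
    have same: "\<And>i. i \<in> ?I - L \<Longrightarrow> x2 i = x i" unfolding x2_def by auto
    have sumx: "(\<Sum>i\<in>?I. x2 i) = (\<Sum>i\<in>?I. x i) + (\<Sum>i\<in>L. x2 i - x i)"
      using sum_diff_on[OF LI _ same, where h = "\<lambda>t. t"] by simp
    have "(\<Sum>i\<in>L. x2 i - x i) = real (card L) * z - (\<Sum>i\<in>L. x i)"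
      unfolding x2_def by (simp add: sum_subtractf)
    then have sumeq: "(\<Sum>i\<in>?I. x2 i) = (\<Sum>i\<in>?I. x i)" using sumx zL by simp
    have aveq: "av n x2 = av n x" unfolding av_Q[OF n1 xQ] av_Q[OF n1 x2Q] sumeq ..
    have num: "NUM n p x \<le> NUM n p x2"
      unfolding NUM_Q[OF n1 xQ] NUM_Q[OF n1 x2Q] aveq
    proof (intro add_left_mono sum_mono)
      fix i assume i: "i \<in> ?I"
      show "max ((1 + x i) / 2) (av n x) powr p \<le> max ((1 + x2 i) / 2) (av n x) powr p"
      proof (cases "i \<in> L")
        case True
        then have "max ((1 + x i) / 2) (av n x) = av n x" unfolding L_def by auto
        then show ?thesis using av_bounds[OF n1 xQ] p1 by (auto intro: powr_mono2)
      next
        case False then show ?thesis unfolding x2_def by simp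
      qed
    qed
    have sump: "(\<Sum>i\<in>?I. x2 i powr p) = (\<Sum>i\<in>?I. x i powr p) + (\<Sum>i\<in>L. x2 i powr p - x i powr p)"
      using sum_diff_on[OF LI _ same, where h = "\<lambda>t. t powr p"] by simp
    have "(\<Sum>i\<in>L. x2 i powr p - x i powr p) = real (card L) * z powr p - (\<Sum>i\<in>L. x i powr p)"
      unfolding x2_def by (simp add: sum_subtractf)
    also have "real (card L) * z powr p \<le> (\<Sum>i\<in>L. x i powr p)"
      unfolding z_def by (rule jensen_mean[OF finL False _ p1]) (use xL in auto)
    then have "real (card L) * z powr p - (\<Sum>i\<in>L. x i powr p) \<le> 0" by simp
    finally have den: "DEN n p x2 \<le> DEN n p x"
      unfolding DEN_Q[OF n1 xQ] DEN_Q[OF n1 x2Q] sump by simp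
    have d2: "DEN n p x2 > 0" using DEN_Q_pos[OF n1 x2Q, of p] by simp
    have "rho n p x \<le> rho n p x2" unfolding rho_def
      by (rule frac_le[OF NUM_nonneg num d2 den])
    moreover have "\<forall>i\<in>?I. x2 i \<in> {z, w}"
    proof
      fix i assume i: "i \<in> ?I"
      show "x2 i \<in> {z, w}"
      proof (cases "i \<in> L")
        case True then show ?thesis unfolding x2_def by simp
      next
        case False then show ?thesis using P i unfolding x2_def L_def by auto
      qed
    qed
    ultimately show ?thesis using x2Q by blast
  qed
qed

theorem proposition2p3:
  fixes n :: nat and p :: real
  assumes "n \<ge> 1" and "p \<ge> 1"
  shows "\<exists>f :: nat \<Rightarrow> real.
           (\<exists>v \<in> star_V n. f v \<noteq> 0) \<and>
           pnorm (star_V n) p (maximal_op (star_V n) (star_E n) f) / pnorm (star_V n) p f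
             = maximal_op_norm (star_V n) (star_E n) p \<and>
           f 1 = Max (f ` star_V n) \<and>
           card (f ` (star_V n - {1})) \<le> 2"
proof -
  note n1 = assms(1) and p1 = assms(2)
  have p0: "p > 0" using p1 by simp
  define e where "e = (\<lambda>i::nat. if i = 1 then 1 else (0::real))"
  have eQ: "e \<in> Qs n" unfolding Qs_iff[OF n1] e_def using n1 by auto
  obtain x0 where x0Q: "x0 \<in> Qs n" and mx: "\<forall>y\<in>Qs n. rho n p y \<le> rho n p x0"
    using continuous_attains_sup[OF Qs_compact _ rho_cont[OF n1 p1]] eQ by blast
  obtain x1 w where x1Q: "x1 \<in> Qs n" and r1: "rho n p x0 \<le> rho n p x1"
      and P: "\<forall>i\<in>{2..n}. x1 i = w \<or> (1 + x1 i) / 2 \<le> av n x1"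
    using U_step[OF n1 p1 x0Q mx] by blast
  obtain x2 z where x2Q: "x2 \<in> Qs n" and r2: "rho n p x1 \<le> rho n p x2"
      and vals: "\<forall>i\<in>{2..n}. x2 i \<in> {z, w}"
    using avg_step[OF n1 p1 x1Q P] by blast
  have best: "rho n p f \<le> rho n p x2" if vf: "v \<in> star_V n" "f v \<noteq> 0" for f v
  proof -
    obtain y where "y \<in> Qs n" "rho n p f \<le> rho n p y" using reduce_to_Q[where f = f and v = v, OF n1 p0 vf] by blast
    then show ?thesis using mx r1 r2 by force
  qed
  have x21: "x2 1 = 1" by (rule q1[OF n1 x2Q])
  have V1: "1 \<in> star_V n" using n1 by (simp add: star_V_def)
  have nz: "\<exists>v \<in> star_V n. x2 v \<noteq> 0" using V1 x21 by (intro bexI[of _ 1]) auto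
  have ratio: "pnorm (star_V n) p (maximal_op (star_V n) (star_E n) x2) / pnorm (star_V n) p x2
      = rho n p x2 powr (1 / p)" by (rule ratio_eq[OF n1 p0])
  have norm: "maximal_op_norm (star_V n) (star_E n) p = rho n p x2 powr (1 / p)"
    unfolding maximal_op_norm_def
  proof (rule cSup_eq_maximum)
    show "rho n p x2 powr (1 / p) \<in> (\<lambda>f. pnorm (star_V n) p (maximal_op (star_V n) (star_E n) f) / pnorm (star_V n) p f) `
        {f. \<exists>v\<in>star_V n. f v \<noteq> 0}"
      using nz ratio by (intro image_eqI[of _ _ x2]) auto
  next
    fix r assume "r \<in> (\<lambda>f. pnorm (star_V n) p (maximal_op (star_V n) (star_E n) f) / pnorm (star_V n) p f) `
        {f. \<exists>v\<in>star_V n. f v \<noteq> 0}"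
    then obtain f v where f: "v \<in> star_V n" "f v \<noteq> 0"
      and r: "r = pnorm (star_V n) p (maximal_op (star_V n) (star_E n) f) / pnorm (star_V n) p f" by blast
    have r': "r = rho n p f powr (1 / p)" unfolding r by (rule ratio_eq[OF n1 p0])
    have "rho n p f \<ge> 0" unfolding rho_def using NUM_nonneg DEN_nonneg by (simp add: divide_nonneg_nonneg)
    then show "r \<le> rho n p x2 powr (1 / p)" unfolding r' using best[where f = f and v = v, OF f] p0 by (intro powr_mono2) auto
  qed
  have mx2: "x2 1 = Max (x2 ` star_V n)"
  proof (rule Max_eqI[symmetric])
    show "finite (x2 ` star_V n)" by (simp add: star_V_def)
    show "x2 1 \<in> x2 ` star_V n" using V1 by simp
    fix y assume "y \<in> x2 ` star_V n"
    then obtain i where i: "i \<in> star_V n" "y = x2 i" by auto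
    show "y \<le> x2 1"
    proof (cases "i = 1")
      case True then show ?thesis using i by simp
    next
      case False
      then have "i \<in> {2..n}" using i by (auto simp: star_V_def)
      then show ?thesis using q2[OF n1 x2Q] i x21 by auto
    qed
  qed
  have cd: "card (x2 ` (star_V n - {1})) \<le> 2"
  proof -
    have "star_V n - {1} = {2..n}" by (auto simp: star_V_def)
    then have "x2 ` (star_V n - {1}) \<subseteq> {z, w}" using vals by auto
    then have "card (x2 ` (star_V n - {1})) \<le> card {z, w}" by (rule card_mono[rotated]) simp
    also have "\<dots> \<le> 2" by (cases "z = w") auto
    finally show ?thesis .
  qed
  show ?thesis using nz ratio norm mx2 cd by (intro exI[of _ x2]) auto
qed

end
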